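(* Consider a $2^k$ full factorial design under the generalized linear model described in the context, i.e., $m=p=2^k$ and the model matrix is \[ \mathbf{X}=\begin{bmatrix}1&-1\\1&1\end{bmatrix}\otimes\cdots\otimes\begin{bmatrix}1&-1\\1&1\end{bmatrix}\quad(k\text{ factors, Kronecker product}), \] and suppose $\nu_i>0$ for all $i$. Then an allocation $\mathbf{w}_*=(w_1^*,\ldots,w_m^* )^T\in S_m$ is A-optimal if and only if $w_i^*\propto\nu_i^{-1/2}$, $i=1,\ldots,m$. Furthermore, the uniform allocation $w_i^*=2^{-k}$ for all $i$ is A-optimal if and only if $\nu_1=\cdots=\nu_m$.
   Context: Generalized linear model (GLM): independent responses $Y_i$ from a one-parameter exponential family with $E(Y_i)=\mu_i$ and $\eta_i=g(\mu_i)=\mathbf{X}_i^T\boldsymbol\beta$, where $g$ is the link function, $\mathbf{X}_i=\mathbf{q}(\mathbf{x}_i)=(q_1(\mathbf{x}_i),\ldots,q_p(\mathbf{x}_i))^T$, and $\boldsymbol\beta\in\mathbb{R}^p$ is a fixed (assumed) parameter vector. Let $\nu_i=(\partial\mu_i/\partial\eta_i)^2/\mathrm{Var}(Y_i)\ge0$. The model matrix is $\mathbf{X}=(\mathbf{q}(\mathbf{x}_1),\ldots,\mathbf{q}(\mathbf{x}_m))^T$. Let $S_m=\{\mathbf{w}\in\mathbb{R}^m: w_i\ge 0,\sum_i w_i=1\}$, $\mathbf{W}=\mathrm{diag}\{w_1\nu_1,\ldots,w_m\nu_m\}$, $f(\mathbf{w})=|\mathbf{X}^T\mathbf{W}\mathbf{X}|$,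 and $h(\mathbf{w})=[\mathrm{tr}((\mathbf{X}^T\mathbf{W}\mathbf{X})^{-1})]^{-1}$ if $f(\mathbf{w})>0$, $h(\mathbf{w})=0$ otherwise. An allocation is A-optimal if it maximizes $h$ over $S_m$. *)

theory Defs
  imports "Jordan_Normal_Form.Matrix" "Jordan_Normal_Form.Determinant"
begin

text \<open>Kronecker product of matrices (row/column index of A is the more significant one).\<close>
definition kron :: "real mat \<Rightarrow> real mat \<Rightarrow> real mat" where
  "kron A B = mat (dim_row A * dim_row B) (dim_col A * dim_col B)
     (\<lambda>(i,j). A $$ (i div dim_row B, j div dim_col B) * B $$ (i mod dim_row B, j mod dim_col B))"

definition H2 :: "real mat" where
  "H2 = mat_of_rows_list 2 [[1, -1], [1, 1]]"

fun design_mat :: "nat \<Rightarrow> real mat" where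
  "design_mat 0 = 1\<^sub>m 1"
| "design_mat (Suc k) = kron H2 (design_mat k)"

definition trace_mat :: "real mat \<Rightarrow> real" where
  "trace_mat A = (\<Sum>i<dim_row A. A $$ (i,i))"

definition inv_mat :: "real mat \<Rightarrow> real mat" where
  "inv_mat A = (SOME B. B \<in> carrier_mat (dim_row A) (dim_row A)
       \<and> A * B = 1\<^sub>m (dim_row A) \<and> B * A = 1\<^sub>m (dim_row A))"

text \<open>Simplex S_m of allocations (only the coordinates i < m matter).\<close>
definition simplex :: "nat \<Rightarrow> (nat \<Rightarrow> real) set" where
  "simplex m = {w. (\<forall>i<m. 0 \<le> w i) \<and> (\<Sum>i<m. w i) = 1}"

definition info_mat :: "real mat \<Rightarrow> (nat \<Rightarrow> real) \<Rightarrow> (nat \<Rightarrow> real) \<Rightarrow> real mat" where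
  "info_mat X nu w = transpose_mat X
     * mat (dim_row X) (dim_row X) (\<lambda>(i,j). if i = j then w i * nu i else 0) * X"

definition f_crit :: "real mat \<Rightarrow> (nat \<Rightarrow> real) \<Rightarrow> (nat \<Rightarrow> real) \<Rightarrow> real" where
  "f_crit X nu w = det (info_mat X nu w)"

definition h_crit :: "real mat \<Rightarrow> (nat \<Rightarrow> real) \<Rightarrow> (nat \<Rightarrow> real) \<Rightarrow> real" where
  "h_crit X nu w = (if f_crit X nu w > 0
      then 1 / trace_mat (inv_mat (info_mat X nu w)) else 0)"

definition A_optimal :: "real mat \<Rightarrow> (nat \<Rightarrow> real) \<Rightarrow> (nat \<Rightarrow> real) \<Rightarrow> bool" where
  "A_optimal X nu w \<longleftrightarrow> w \<in> simplex (dim_row X)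
     \<and> (\<forall>v \<in> simplex (dim_row X). h_crit X nu v \<le> h_crit X nu w)"

end

theory Submission
  imports Defs
begin

lemma sum_split_mult:
  "(\<Sum>l<a*b. (g l :: real)) = (\<Sum>x<a. \<Sum>y<b. g (x*b+y :: nat))"
proof (induction a)
  case 0 then show ?case by simp
next
  case (Suc a)
  have e: "{..<Suc a * b} = {..<a*b} \<union> {a*b..<a*b+b}" by auto
  have d: "{..<a*b} \<inter> {a*b..<a*b+b} = {}" by auto
  have "(\<Sum>l<Suc a*b. g l) = (\<Sum>l<a*b. g l) + (\<Sum>l\<in>{a*b..<a*b+b}. g l)"
    unfolding e by (rule sum.union_disjoint) (use d in auto)
  also have "(\<Sum>l\<in>{a*b..<a*b+b}. g l) = (\<Sum>y\<in>{0..<b}. g (y + a*b))"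
    using sum.shift_bounds_nat_ivl[of g 0 "a*b" b] by (simp add: add.commute)
  also have "\<dots> = (\<Sum>y<b. g (a*b+y))" by (simp add: lessThan_atLeast0 add.commute)
  finally show ?case using Suc by simp
qed
lemma kron_carrier: "kron A B \<in> carrier_mat (dim_row A * dim_row B) (dim_col A * dim_col B)"
  unfolding kron_def by simp

lemma kron_index: "i < dim_row A * dim_row B \<Longrightarrow> j < dim_col A * dim_col B \<Longrightarrow>
  kron A B $$ (i,j) = A $$ (i div dim_row B, j div dim_col B) * B $$ (i mod dim_row B, j mod dim_col B)"
  unfolding kron_def by simp

lemma kron_transpose: "transpose_mat (kron A B) = kron (transpose_mat A) (transpose_mat B)"
proof (rule eq_matI)
  fix i j assume "i < dim_row (kron (transpose_mat A) (transpose_mat B))"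
    "j < dim_col (kron (transpose_mat A) (transpose_mat B))"
  then have i: "i < dim_col A * dim_col B" and j: "j < dim_row A * dim_row B" by (auto simp: kron_def)
  have a1: "i div dim_col B < dim_col A" "j div dim_row B < dim_row A"
    using i j by (auto simp: less_mult_imp_div_less)
  have "dim_col B > 0" "dim_row B > 0" using i j by (cases "dim_col B = 0"; cases "dim_row B = 0"; auto)+
  then have a2: "i mod dim_col B < dim_col B" "j mod dim_row B < dim_row B" by auto
  show "transpose_mat (kron A B) $$ (i, j) = kron (transpose_mat A) (transpose_mat B) $$ (i, j)"
    using i j a1 a2 by (simp add: kron_def)
qed (auto simp: kron_def mult.commute)

lemma kron_mult:
  assumes A: "A \<in> carrier_mat a1 a2" and B: "B \<in> carrier_mat b1 b2"
    and C: "C \<in> carrier_mat a2 a3" and D: "D \<in> carrier_mat b2 b3"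
    and b1: "b1 > 0" and b2: "b2 > 0" and b3: "b3 > 0"
  shows "kron A B * kron C D = kron (A*C) (B*D)"
proof (rule eq_matI)
  show "dim_row (kron A B * kron C D) = dim_row (kron (A*C) (B*D))"
    using A B C D by (simp add: kron_def)
  show "dim_col (kron A B * kron C D) = dim_col (kron (A*C) (B*D))"
    using A B C D by (simp add: kron_def)
  fix i j assume i: "i < dim_row (kron (A*C) (B*D))" and j: "j < dim_col (kron (A*C) (B*D))"
  then have i': "i < a1*b1" and j': "j < a3*b3" using A B C D by (auto simp: kron_def)
  have idiv: "i div b1 < a1" using i' by (simp add: less_mult_imp_div_less)
  have jdiv: "j div b3 < a3" using j' by (simp add: less_mult_imp_div_less)
  have imod: "i mod b1 < b1" using b1 by simp
  have jmod: "j mod b3 < b3" using b3 by simp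
  have "(kron A B * kron C D) $$ (i,j) = (\<Sum>l<a2*b2. kron A B $$ (i,l) * kron C D $$ (l,j))"
    using A B C D i' j' by (simp add: kron_def scalar_prod_def lessThan_atLeast0)
  also have "\<dots> = (\<Sum>x<a2. \<Sum>y<b2. kron A B $$ (i,x*b2+y) * kron C D $$ (x*b2+y,j))"
    by (rule sum_split_mult)
  also have "\<dots> = (\<Sum>x<a2. \<Sum>y<b2. (A $$ (i div b1, x) * C $$ (x, j div b3)) * (B $$ (i mod b1, y) * D $$ (y, j mod b3)))"
  proof (intro sum.cong refl)
    fix x y assume x: "x \<in> {..<a2}" and y: "y \<in> {..<b2}"
    have l1: "x*b2+y < x*b2+b2" using y by simp
    have l2: "Suc x * b2 \<le> a2*b2" using x by (intro mult_le_mono1) simp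
    have l: "x*b2+y < a2*b2" using l1 l2 by simp
    have "(x*b2+y) div b2 = x" "(x*b2+y) mod b2 = y" using y b2 by auto
    then show "kron A B $$ (i,x*b2+y) * kron C D $$ (x*b2+y,j) = (A $$ (i div b1, x) * C $$ (x, j div b3)) * (B $$ (i mod b1, y) * D $$ (y, j mod b3))"
      using A B C D i' j' l by (simp add: kron_index)
  qed
  also have "\<dots> = (\<Sum>x<a2. A $$ (i div b1, x) * C $$ (x, j div b3)) * (\<Sum>y<b2. B $$ (i mod b1, y) * D $$ (y, j mod b3))"
    by (simp add: sum_product)
  also have "\<dots> = kron (A*C) (B*D) $$ (i,j)"
    using A B C D i' j' idiv jdiv imod jmod
    by (simp add: kron_index scalar_prod_def lessThan_atLeast0)
  finally show "(kron A B * kron C D) $$ (i,j) = kron (A*C) (B*D) $$ (i,j)" .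
qed


lemma divmod_bounds: "(i::nat) < a*b \<Longrightarrow> i div b < a \<and> i mod b < b"
  by (cases "b = 0") (auto simp: less_mult_imp_div_less)

lemma kron_smult: "kron (c \<cdot>\<^sub>m A) (d \<cdot>\<^sub>m B) = (c*d) \<cdot>\<^sub>m kron A B"
  by (rule eq_matI) (auto simp: kron_def dest!: divmod_bounds)

lemma kron_one: assumes "b > 0" shows "kron (1\<^sub>m a) (1\<^sub>m b) = 1\<^sub>m (a*b)"
proof (rule eq_matI)
  fix i j assume "i < dim_row (1\<^sub>m (a*b))" "j < dim_col (1\<^sub>m (a*b))"
  moreover have "(i div b = j div b \<and> i mod b = j mod b) \<longleftrightarrow> i = j"
    by (metis div_mult_mod_eq)
  ultimately show "kron (1\<^sub>m a) (1\<^sub>m b) $$ (i,j) = 1\<^sub>m (a*b) $$ (i,j)"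
    using assms by (auto simp: kron_def less_mult_imp_div_less)
qed (auto simp: kron_def)

lemma H2_alt: "H2 = mat 2 2 (\<lambda>(i,j). if i = 0 \<and> j = 1 then -1 else 1)"
proof -
  have l: "length [[1,-1],[1,1::real]] = 2" by simp
  have "mat 2 2 (\<lambda>(i,j). [[1, - 1], [1, 1::real]] ! i ! j) = mat 2 2 (\<lambda>(i,j). if i = 0 \<and> j = 1 then -1 else 1)"
  proof (rule eq_matI)
    fix i j assume "i < dim_row (mat 2 2 (\<lambda>(i,j). if i = 0 \<and> j = 1 then -1 else (1::real)))"
      "j < dim_col (mat 2 2 (\<lambda>(i,j). if i = 0 \<and> j = 1 then -1 else (1::real)))"
    then have i: "i < 2" and j: "j < 2" by simp_all
    then have "i = 0 \<or> i = 1" "j = 0 \<or> j = 1" by linarith+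
    then show "mat 2 2 (\<lambda>(i,j). [[1, - 1], [1, 1::real]] ! i ! j) $$ (i,j) = mat 2 2 (\<lambda>(i,j). if i = 0 \<and> j = 1 then -1 else (1::real)) $$ (i,j)"
      using i j by (elim disjE) simp_all
  qed simp_all
  then show ?thesis unfolding H2_def mat_of_rows_list_def l .
qed

lemma H2_carrier: "H2 \<in> carrier_mat 2 2"
  unfolding H2_alt by simp
lemma sum2: "(\<Sum>l\<in>{0..<2::nat}. f l) = f 0 + (f 1 :: real)"
  by (simp add: numeral_2_eq_2)

lemma H2_orth: "transpose_mat H2 * H2 = 2 \<cdot>\<^sub>m 1\<^sub>m 2" "H2 * transpose_mat H2 = 2 \<cdot>\<^sub>m 1\<^sub>m 2"
proof -
  show "transpose_mat H2 * H2 = 2 \<cdot>\<^sub>m 1\<^sub>m 2"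
  proof (rule eq_matI)
    fix i j assume "i < dim_row (2 \<cdot>\<^sub>m 1\<^sub>m 2 :: real mat)" "j < dim_col (2 \<cdot>\<^sub>m 1\<^sub>m 2 :: real mat)"
    then have i: "i < 2" and j: "j < 2" by simp_all
    then have "i = 0 \<or> i = 1" "j = 0 \<or> j = 1" by linarith+
    then show "(transpose_mat H2 * H2) $$ (i, j) = (2 \<cdot>\<^sub>m 1\<^sub>m 2 :: real mat) $$ (i, j)"
      using i j by (elim disjE) (simp_all add: H2_alt scalar_prod_def sum2)
  qed (simp_all add: H2_alt)
  show "H2 * transpose_mat H2 = 2 \<cdot>\<^sub>m 1\<^sub>m 2"
  proof (rule eq_matI)
    fix i j assume "i < dim_row (2 \<cdot>\<^sub>m 1\<^sub>m 2 :: real mat)" "j < dim_col (2 \<cdot>\<^sub>m 1\<^sub>m 2 :: real mat)"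
    then have i: "i < 2" and j: "j < 2" by simp_all
    then have "i = 0 \<or> i = 1" "j = 0 \<or> j = 1" by linarith+
    then show "(H2 * transpose_mat H2) $$ (i, j) = (2 \<cdot>\<^sub>m 1\<^sub>m 2 :: real mat) $$ (i, j)"
      using i j by (elim disjE) (simp_all add: H2_alt scalar_prod_def sum2)
  qed (simp_all add: H2_alt)
qed

lemma design_props: "design_mat k \<in> carrier_mat (2^k) (2^k) \<and>
   transpose_mat (design_mat k) * design_mat k = (2^k) \<cdot>\<^sub>m 1\<^sub>m (2^k) \<and>
   design_mat k * transpose_mat (design_mat k) = (2^k) \<cdot>\<^sub>m 1\<^sub>m (2^k)"
proof (induction k)
  case 0 then show ?case by (auto intro!: eq_matI)
next
  case (Suc k)
  let ?X = "design_mat k"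
  have X: "?X \<in> carrier_mat (2^k) (2^k)" using Suc by simp
  have p: "(0::nat) < 2^k" by simp
  have c: "design_mat (Suc k) \<in> carrier_mat (2^Suc k) (2^Suc k)"
    using X H2_carrier by (auto simp: kron_def)
  have "transpose_mat (design_mat (Suc k)) * design_mat (Suc k)
     = kron (transpose_mat H2 * H2) (transpose_mat ?X * ?X)"
    by (simp add: kron_transpose) (rule kron_mult[OF _ _ H2_carrier X], insert H2_carrier X p, auto)
  also have "\<dots> = (2^Suc k) \<cdot>\<^sub>m 1\<^sub>m (2^Suc k)"
    using Suc H2_orth by (simp add: kron_smult kron_one)
  finally have 1: "transpose_mat (design_mat (Suc k)) * design_mat (Suc k) = (2^Suc k) \<cdot>\<^sub>m 1\<^sub>m (2^Suc k)" .
  have "design_mat (Suc k) * transpose_mat (design_mat (Suc k))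
     = kron (H2 * transpose_mat H2) (?X * transpose_mat ?X)"
    by (simp add: kron_transpose) (rule kron_mult[OF H2_carrier X], insert H2_carrier X p, auto)
  also have "\<dots> = (2^Suc k) \<cdot>\<^sub>m 1\<^sub>m (2^Suc k)"
    using Suc H2_orth by (simp add: kron_smult kron_one)
  finally show ?case using 1 c by simp
qed





definition Dg :: "nat \<Rightarrow> (nat \<Rightarrow> real) \<Rightarrow> real mat" where
  "Dg m d = mat m m (\<lambda>(i,j). if i = j then d i else 0)"

lemma Dg_carrier[simp]: "Dg m d \<in> carrier_mat m m"
  by (simp add: Dg_def)

lemma Dg_mult: "Dg m d * Dg m e = Dg m (\<lambda>i. d i * e i)"
proof (rule eq_matI)
  fix i j assume "i < dim_row (Dg m (\<lambda>i. d i * e i))" "j < dim_col (Dg m (\<lambda>i. d i * e i))"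
  then have i: "i < m" and j: "j < m" by (simp_all add: Dg_def)
  have "(Dg m d * Dg m e) $$ (i,j) = (\<Sum>l\<in>{0..<m}. (if i = l then d i else 0) * (if l = j then e l else 0))"
    using i j by (simp add: Dg_def scalar_prod_def)
  also have "\<dots> = (\<Sum>l\<in>{0..<m}. if l = i then (if i = j then d i * e i else 0) else 0)"
    by (rule sum.cong) auto
  also have "\<dots> = Dg m (\<lambda>i. d i * e i) $$ (i,j)"
    using i j by (simp add: Dg_def)
  finally show "(Dg m d * Dg m e) $$ (i,j) = Dg m (\<lambda>i. d i * e i) $$ (i,j)" .
qed (simp_all add: Dg_def)

lemma Dg_one: "Dg m (\<lambda>i. 1) = 1\<^sub>m m"
  by (rule eq_matI) (auto simp: Dg_def)

lemma Dg_inv: assumes "\<And>i. i < m \<Longrightarrow> d i \<noteq> 0"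
  shows "Dg m d * Dg m (\<lambda>i. 1 / d i) = 1\<^sub>m m" "Dg m (\<lambda>i. 1 / d i) * Dg m d = 1\<^sub>m m"
proof -
  have "Dg m (\<lambda>i. d i * (1 / d i)) = Dg m (\<lambda>i. 1)" "Dg m (\<lambda>i. (1 / d i) * d i) = Dg m (\<lambda>i. 1)"
    using assms by (auto simp: Dg_def intro!: eq_matI)
  then show "Dg m d * Dg m (\<lambda>i. 1 / d i) = 1\<^sub>m m" "Dg m (\<lambda>i. 1 / d i) * Dg m d = 1\<^sub>m m"
    by (simp_all add: Dg_mult Dg_one)
qed

lemma det_Dg: "det (Dg m d) = (\<Prod>i<m. d i)"
proof -
  have "upper_triangular (Dg m d)" by (auto simp: upper_triangular_def Dg_def)
  then have "det (Dg m d) = prod_list (diag_mat (Dg m d))"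
    by (rule det_upper_triangular[OF _ Dg_carrier])
  also have "\<dots> = (\<Prod>i<m. d i)"
    by (simp add: prod_list_diag_prod Dg_def lessThan_atLeast0)
  finally show ?thesis .
qed

lemma trace_comm: assumes "A \<in> carrier_mat n k" "B \<in> carrier_mat k n"
  shows "trace_mat (A * B) = trace_mat (B * A)"
proof -
  have "trace_mat (A * B) = (\<Sum>i<n. \<Sum>l<k. A $$ (i,l) * B $$ (l,i))"
    using assms by (simp add: trace_mat_def scalar_prod_def lessThan_atLeast0)
  also have "\<dots> = (\<Sum>l<k. \<Sum>i<n. B $$ (l,i) * A $$ (i,l))"
    by (subst sum.swap) (simp add: mult.commute)
  also have "\<dots> = trace_mat (B * A)"
    using assms by (simp add: trace_mat_def scalar_prod_def lessThan_atLeast0)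
  finally show ?thesis .
qed

lemma trace_smult_Dg: "trace_mat (c \<cdot>\<^sub>m Dg m d) = c * (\<Sum>i<m. d i)"
  by (simp add: trace_mat_def Dg_def sum_distrib_left)


lemma cancel_left: fixes A B Y :: "real mat" assumes "A \<in> carrier_mat n n" "B \<in> carrier_mat n n" "A * B = 1\<^sub>m n" "Y \<in> carrier_mat n p"
  shows "A * (B * Y) = Y"
proof -
  have "A * (B * Y) = (A * B) * Y" using assoc_mult_mat[OF assms(1,2,4)] by simp
  then show ?thesis using assms(3,4) left_mult_one_mat[of Y n p] by simp
qed

context
  fixes X :: "real mat" and m :: nat
  assumes Xc: "X \<in> carrier_mat m m"
    and XtX: "transpose_mat X * X = real m \<cdot>\<^sub>m 1\<^sub>m m"
    and XXt: "X * transpose_mat X = real m \<cdot>\<^sub>m 1\<^sub>m m"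
    and mpos: "m > 0"
begin

lemma assoc_m: "A \<in> carrier_mat m m \<Longrightarrow> B \<in> carrier_mat m m \<Longrightarrow> C \<in> carrier_mat m m \<Longrightarrow> A * B * C = A * (B * C)"
  by simp

lemma mc: "A \<in> carrier_mat m m \<Longrightarrow> B \<in> carrier_mat m m \<Longrightarrow> A * B \<in> carrier_mat m m"
  by simp

lemma info_eq: "info_mat X nu w = transpose_mat X * Dg m (\<lambda>i. w i * nu i) * X"
  unfolding info_mat_def Dg_def using Xc by simp

lemma detX2: "det X * det X = real m ^ m"
proof -
  have "det (transpose_mat X * X) = det (transpose_mat X) * det X"
    using Xc by (intro det_mult) auto
  also have "\<dots> = det X * det X" using Xc by (simp add: det_transpose)
  finally show ?thesis using XtX Xc by simp
qed

lemma f_eq: "f_crit X nu w = det X * det X * (\<Prod>i<m. w i * nu i)"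
proof -
  let ?D = "Dg m (\<lambda>i. w i * nu i)"
  have "det (transpose_mat X * ?D * X) = det (transpose_mat X * ?D) * det X"
    using Xc by (intro det_mult) auto
  also have "det (transpose_mat X * ?D) = det (transpose_mat X) * det ?D"
    using Xc by (intro det_mult) auto
  finally show ?thesis using Xc by (simp add: f_crit_def info_eq det_transpose det_Dg)
qed

lemma detX2_pos: "det X * det X > 0"
  using mpos by (simp add: detX2)

lemma h_pos:
  assumes pos: "\<And>i. i < m \<Longrightarrow> w i * nu i > 0"
  shows "h_crit X nu w = real m / (\<Sum>i<m. 1 / (w i * nu i))"
proof -
  define d where "d = (\<lambda>i. w i * nu i)"
  let ?D = "Dg m d" and ?Di = "Dg m (\<lambda>i. 1 / d i)"
  let ?P = "(1 / real m) \<cdot>\<^sub>m transpose_mat X" and ?Q = "(1 / real m) \<cdot>\<^sub>m X"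
  let ?A = "transpose_mat X * ?D * X"
  let ?B = "?P * (?Di * ?Q)"
  have dnz: "\<And>i. i < m \<Longrightarrow> d i \<noteq> 0" using pos unfolding d_def by (metis less_irrefl)
  have Xt: "transpose_mat X \<in> carrier_mat m m" using Xc by simp
  have Pc: "?P \<in> carrier_mat m m" and Qc: "?Q \<in> carrier_mat m m" using Xc by auto
  have mnz: "real m \<noteq> 0" using mpos by simp
  have PX: "?P * X = 1\<^sub>m m"
    using mult_smult_assoc_mat[OF Xt Xc] XtX mnz by (auto intro!: eq_matI)
  have XtQ: "transpose_mat X * ?Q = 1\<^sub>m m"
    using mult_smult_distrib[OF Xt Xc] XtX mnz by (auto intro!: eq_matI)
  have QXt: "?Q * transpose_mat X = 1\<^sub>m m"
    using mult_smult_assoc_mat[OF Xc Xt] XXt mnz by (auto intro!: eq_matI)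
  have XP: "X * ?P = 1\<^sub>m m"
    using mult_smult_distrib[OF Xc Xt] XXt mnz by (auto intro!: eq_matI)
  have DDi: "?D * ?Di = 1\<^sub>m m" and DiD: "?Di * ?D = 1\<^sub>m m" using Dg_inv[of m d] dnz by auto
  have Ac: "?A \<in> carrier_mat m m" and Bc: "?B \<in> carrier_mat m m" using Xc by auto
  have AB: "?A * ?B = 1\<^sub>m m"
  proof -
    have "?A * ?B = transpose_mat X * (?D * (X * (?P * (?Di * ?Q))))"
      using Xc Pc Qc by (simp add: assoc_m mc)
    also have "X * (?P * (?Di * ?Q)) = ?Di * ?Q"
      by (rule cancel_left[OF Xc Pc XP, where p = m]) (use Qc in \<open>simp add: mc\<close>)
    also have "?D * (?Di * ?Q) = ?Q"
      by (rule cancel_left[OF Dg_carrier Dg_carrier DDi Qc])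
    finally show ?thesis using XtQ by simp
  qed
  have BA: "?B * ?A = 1\<^sub>m m"
  proof -
    have "?B * ?A = ?P * (?Di * (?Q * (transpose_mat X * (?D * X))))"
      using Xc Pc Qc by (simp add: assoc_m mc)
    also have "?Q * (transpose_mat X * (?D * X)) = ?D * X"
      by (rule cancel_left[OF Qc Xt QXt, where p = m]) (use Xc in \<open>simp add: mc\<close>)
    also have "?Di * (?D * X) = X"
      by (rule cancel_left[OF Dg_carrier Dg_carrier DiD Xc])
    finally show ?thesis using PX by simp
  qed
  have dimA: "dim_row ?A = m" using Xc by simp
  have inv: "inv_mat ?A = ?B"
    unfolding inv_mat_def dimA
  proof (rule some_equality)
    show "?B \<in> carrier_mat m m \<and> ?A * ?B = 1\<^sub>m m \<and> ?B * ?A = 1\<^sub>m m" using Bc AB BA by simp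
  next
    fix B' assume B': "B' \<in> carrier_mat m m \<and> ?A * B' = 1\<^sub>m m \<and> B' * ?A = 1\<^sub>m m"
    have "B' = B' * (?A * ?B)" using AB B' right_mult_one_mat[of B' m m] by simp
    also have "\<dots> = (B' * ?A) * ?B" by (rule assoc_mult_mat[symmetric]) (use B' Ac Bc in auto)
    also have "\<dots> = ?B" using B' Bc left_mult_one_mat[of ?B m m] by simp
    finally show "B' = ?B" .
  qed
  have "trace_mat ?B = trace_mat ((?Di * ?Q) * ?P)"
    by (rule trace_comm[OF Pc]) (use Qc in \<open>simp add: mc\<close>)
  also have "(?Di * ?Q) * ?P = ?Di * (?Q * ?P)" using Pc Qc by (simp add: assoc_m)
  also have "?Q * ?P = (1 / real m) \<cdot>\<^sub>m 1\<^sub>m m"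
    using mult_smult_assoc_mat[OF Xc Pc] mult_smult_distrib[OF Xc Xt] XXt mnz
    by (auto intro!: eq_matI)
  also have "?Di * ((1 / real m) \<cdot>\<^sub>m 1\<^sub>m m) = (1 / real m) \<cdot>\<^sub>m ?Di"
    using mult_smult_distrib[OF Dg_carrier one_carrier_mat] right_mult_one_mat[OF Dg_carrier] by simp
  finally have tr: "trace_mat ?B = (1 / real m) * (\<Sum>i<m. 1 / d i)"
    by (simp add: trace_smult_Dg)
  have fpos: "f_crit X nu w > 0"
  proof -
    have "(\<Prod>i<m. w i * nu i) > 0" using pos by (intro prod_pos) simp
    then show ?thesis using detX2_pos unfolding f_eq by (rule mult_pos_pos[rotated])
  qed
  show ?thesis
    unfolding h_crit_def using fpos inv tr
    by (simp add: info_eq d_def)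
qed

lemma h_zero:
  assumes nn: "\<And>i. i < m \<Longrightarrow> w i * nu i \<ge> 0" and z: "i0 < m" "w i0 * nu i0 = 0"
  shows "h_crit X nu w = 0"
proof -
  have p0: "(\<Prod>i<m. w i * nu i) = 0" using z by (intro prod_zero) auto
  have "f_crit X nu w = 0" by (simp only: f_eq p0 mult_zero_right)
  then show ?thesis by (simp add: h_crit_def)
qed

end


lemma key_identity:
  fixes a v nu :: "nat \<Rightarrow> real"
  assumes vpos: "\<And>i. i < m \<Longrightarrow> v i > 0" and anu: "\<And>i. i < m \<Longrightarrow> a i * a i * nu i = 1"
    and vs: "(\<Sum>i<m. v i) = 1" and S: "S = (\<Sum>i<m. a i)"
  shows "(\<Sum>i<m. 1 / (v i * nu i)) = S^2 + (\<Sum>i<m. (a i - v i * S)^2 / v i)"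
proof -
  have per: "(a i - v i * S)^2 / v i = 1 / (v i * nu i) - 2 * S * a i + S^2 * v i" if i: "i < m" for i
  proof -
    have v0: "v i \<noteq> 0" using vpos[OF i] by simp
    have n0: "nu i \<noteq> 0" using anu[OF i] by auto
    have "1 / (v i * nu i) = a i * a i / v i"
      using anu[OF i] v0 n0 by (simp add: field_simps)
    then show ?thesis using v0 by (simp add: field_simps power2_eq_square)
  qed
  have "(\<Sum>i<m. (a i - v i * S)^2 / v i) = (\<Sum>i<m. 1 / (v i * nu i) - 2 * S * a i + S^2 * v i)"
    using per by (intro sum.cong) auto
  also have "\<dots> = (\<Sum>i<m. 1 / (v i * nu i)) - 2 * S * (\<Sum>i<m. a i) + S^2 * (\<Sum>i<m. v i)"
    by (simp add: sum.distrib sum_subtractf sum_distrib_left)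
  finally show ?thesis using vs S by (simp add: power2_eq_square)
qed

theorem corollary1:
  fixes k :: nat and nu :: "nat \<Rightarrow> real" and w :: "nat \<Rightarrow> real"
  assumes "1 \<le> k"
    and "\<And>i. i < 2 ^ k \<Longrightarrow> nu i > 0"
  shows "(w \<in> simplex (2 ^ k) \<longrightarrow>
            (A_optimal (design_mat k) nu w \<longleftrightarrow>
              (\<exists>c. \<forall>i < 2 ^ k. w i = c * nu i powr (-1/2))))
       \<and> (A_optimal (design_mat k) nu (\<lambda>i. 1 / 2 ^ k) \<longleftrightarrow>
              (\<forall>i < 2 ^ k. \<forall>j < 2 ^ k. nu i = nu j))"
proof -
  define m :: nat where "m = 2 ^ k"
  define X where "X = design_mat k"
  have nupos: "\<And>i. i < m \<Longrightarrow> nu i > 0" using assms(2) m_def by simp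
  have mpos: "m > 0" by (simp add: m_def)
  have Xc: "X \<in> carrier_mat m m" and XtX: "transpose_mat X * X = real m \<cdot>\<^sub>m 1\<^sub>m m"
    and XXt: "X * transpose_mat X = real m \<cdot>\<^sub>m 1\<^sub>m m"
    using design_props[of k] by (simp_all add: m_def X_def)
  have dimX: "dim_row X = m" using Xc by simp
  note hp = h_pos[OF Xc XtX XXt mpos]
  note hz = h_zero[OF Xc XtX XXt mpos]
  define a where "a i = nu i powr (-1/2)" for i
  define S where "S = (\<Sum>i<m. a i)"
  have apos: "\<And>i. i < m \<Longrightarrow> a i > 0" using nupos by (simp add: a_def) (metis less_irrefl)
  have anu: "a i * a i * nu i = 1" if i: "i < m" for i
  proof -
    have "a i * a i = nu i powr (-1)" unfolding a_def by (simp add: powr_add[symmetric])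
    also have "\<dots> = 1 / nu i" using nupos[OF i] by (simp add: powr_neg_one)
    finally show ?thesis using nupos[OF i] by simp
  qed
  have Spos: "S > 0" unfolding S_def using apos mpos by (intro sum_pos) auto
  define T where "T v = (\<Sum>i<m. 1 / (v i * nu i))" for v :: "nat \<Rightarrow> real"
  have Tid: "T v = S^2 + (\<Sum>i<m. (a i - v i * S)^2 / v i)"
    if "\<And>i. i < m \<Longrightarrow> v i > 0" "(\<Sum>i<m. v i) = 1" for v
    unfolding T_def by (rule key_identity[OF that(1) anu that(2) S_def])
  have hpos_eq: "h_crit X nu v = real m / T v" if "\<And>i. i < m \<Longrightarrow> v i > 0" for v
    unfolding T_def using that nupos by (intro hp) simp
  have ub: "h_crit X nu v \<le> real m / S^2" if v: "v \<in> simplex m" for v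
  proof (cases "\<forall>i<m. v i > 0")
    case True
    have vs: "(\<Sum>i<m. v i) = 1" using v by (simp add: simplex_def)
    have "(\<Sum>i<m. (a i - v i * S)^2 / v i) \<ge> 0" using True by (intro sum_nonneg) auto
    then have "T v \<ge> S^2" using Tid[OF _ vs] True by simp
    moreover have "S^2 > 0" using Spos by simp
    ultimately have "T v > 0" by linarith
    with \<open>T v \<ge> S^2\<close> \<open>S^2 > 0\<close> have "real m / T v \<le> real m / S^2"
      by (intro divide_left_mono) auto
    then show ?thesis using hpos_eq True by simp
  next
    case False
    then obtain i0 where "i0 < m" "\<not> v i0 > 0" by auto
    moreover have "\<And>i. i < m \<Longrightarrow> v i \<ge> 0" using v by (simp add: simplex_def)
    ultimately have "v i0 = 0" by force
    have "h_crit X nu v = 0"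
      by (rule hz[OF _ \<open>i0 < m\<close>]) (use v nupos \<open>v i0 = 0\<close> in \<open>auto simp: simplex_def less_imp_le\<close>)
    then show ?thesis by simp
  qed
  have attain: "h_crit X nu v = real m / S^2"
    if v: "v \<in> simplex m" and pr: "\<And>i. i < m \<Longrightarrow> v i = a i / S" for v
  proof -
    have vp: "\<And>i. i < m \<Longrightarrow> v i > 0" using pr apos Spos by simp
    have vs: "(\<Sum>i<m. v i) = 1" using v by (simp add: simplex_def)
    have "(\<Sum>i<m. (a i - v i * S)^2 / v i) = 0" using pr Spos by (intro sum.neutral) auto
    then have "T v = S^2" using Tid[OF vp vs] by simp
    then show ?thesis using hpos_eq[OF vp] by simp
  qed
  have forced: "\<forall>i<m. v i = a i / S"
    if v: "v \<in> simplex m" and hv: "h_crit X nu v \<ge> real m / S^2" for v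
  proof -
    have mS: "real m / S^2 > 0" using mpos Spos by simp
    have vp: "\<forall>i<m. v i > 0"
    proof (rule ccontr)
      assume "\<not> (\<forall>i<m. v i > 0)"
      then obtain i0 where "i0 < m" "\<not> v i0 > 0" by auto
      moreover have "\<And>i. i < m \<Longrightarrow> v i \<ge> 0" using v by (simp add: simplex_def)
      ultimately have "v i0 = 0" by force
      have "h_crit X nu v = 0"
        by (rule hz[OF _ \<open>i0 < m\<close>]) (use v nupos \<open>v i0 = 0\<close> in \<open>auto simp: simplex_def less_imp_le\<close>)
      then show False using hv mS by simp
    qed
    have vs: "(\<Sum>i<m. v i) = 1" using v by (simp add: simplex_def)
    have Tv: "T v = S^2 + (\<Sum>i<m. (a i - v i * S)^2 / v i)" using Tid[OF _ vs] vp by simp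
    have nn: "(\<Sum>i<m. (a i - v i * S)^2 / v i) \<ge> 0" using vp by (intro sum_nonneg) auto
    have Tpos: "T v > 0" using Tv nn Spos by (smt (verit) zero_less_power)
    have "real m / S^2 \<le> real m / T v" using hv hpos_eq vp by simp
    then have "T v \<le> S^2"
    proof (rule contrapos_pp)
      assume "\<not> T v \<le> S^2"
      then have "S^2 < T v" by simp
      then have "real m / T v < real m / S^2"
        by (intro divide_strict_left_mono) (use Spos mpos Tpos in \<open>auto intro: mult_pos_pos\<close>)
      then show "\<not> real m / S^2 \<le> real m / T v" by simp
    qed
    then have "(\<Sum>i<m. (a i - v i * S)^2 / v i) = 0" using Tv nn by simp
    then have "\<forall>i\<in>{..<m}. (a i - v i * S)^2 / v i = 0"
      using vp by (subst sum_nonneg_eq_0_iff[symmetric]) auto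
    then have "\<forall>i<m. a i = S * v i"
    proof (intro allI impI)
      fix i assume H: "\<forall>i\<in>{..<m}. (a i - v i * S)^2 / v i = 0" and i: "i < m"
      then have "(a i - v i * S)^2 / v i = 0" by simp
      moreover have "v i > 0" using vp i by simp
      ultimately have "(a i - v i * S)^2 = 0" by simp
      then show "a i = S * v i" by (simp add: mult.commute)
    qed
    then show ?thesis using Spos by (auto simp: field_simps)
  qed
  have wstar: "(\<lambda>i. a i / S) \<in> simplex m"
    using apos Spos by (auto simp: simplex_def S_def sum_divide_distrib[symmetric] less_imp_le)
  have hstar: "h_crit X nu (\<lambda>i. a i / S) = real m / S^2"
    by (rule attain[OF wstar]) simp
  have part1: "A_optimal X nu v \<longleftrightarrow> (\<exists>c. \<forall>i < m. v i = c * a i)" if v: "v \<in> simplex m" for v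
  proof
    assume "A_optimal X nu v"
    then have "h_crit X nu v \<ge> real m / S^2"
      using wstar hstar unfolding A_optimal_def dimX by metis
    then have "\<forall>i<m. v i = a i / S" by (rule forced[OF v])
    then show "\<exists>c. \<forall>i < m. v i = c * a i" by (intro exI[of _ "1/S"]) simp
  next
    assume "\<exists>c. \<forall>i < m. v i = c * a i"
    then obtain c where c: "\<And>i. i < m \<Longrightarrow> v i = c * a i" by auto
    have "1 = (\<Sum>i<m. v i)" using v by (simp add: simplex_def)
    also have "\<dots> = c * S" unfolding S_def sum_distrib_left using c by simp
    finally have "c = 1 / S" using Spos by (simp add: field_simps)
    then have "\<And>i. i < m \<Longrightarrow> v i = a i / S" using c by simp
    then have "h_crit X nu v = real m / S^2" by (rule attain[OF v])
    then show "A_optimal X nu v"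
      unfolding A_optimal_def dimX using v ub by simp
  qed
  have unif: "(\<lambda>i. 1 / 2 ^ k :: real) \<in> simplex m"
    by (simp add: simplex_def m_def)
  have part2: "(\<exists>c. \<forall>i < m. 1 / 2 ^ k = c * a i) \<longleftrightarrow> (\<forall>i < m. \<forall>j < m. nu i = nu j)"
  proof
    assume "\<exists>c. \<forall>i < m. 1 / 2 ^ k = c * a i"
    then obtain c where c: "\<And>i. i < m \<Longrightarrow> 1 / 2 ^ k = c * (a i :: real)" by auto
    show "\<forall>i < m. \<forall>j < m. nu i = nu j"
    proof (intro allI impI)
      fix i j assume i: "i < m" and j: "j < m"
      have cc: "c * a i = c * a j" using c[OF i] c[OF j] by linarith
      have "c \<noteq> 0"
      proof
        assume "c = 0"
        with c[OF i] show False by simp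
      qed
      with cc have aij: "a i = a j" by simp
      have "(a i * a i) * nu i = (a i * a i) * nu j" using anu[OF i] anu[OF j] aij by simp
      moreover have "a i * a i \<noteq> 0" using apos[OF i] by simp
      ultimately show "nu i = nu j" by simp
    qed
  next
    assume eq: "\<forall>i < m. \<forall>j < m. nu i = nu j"
    have a0: "a 0 > 0" using apos[OF mpos] .
    have "\<forall>i < m. 1 / 2 ^ k = (1 / (2 ^ k * a 0)) * a i"
    proof (intro allI impI)
      fix i assume i: "i < m"
      have "nu i = nu 0" using eq i mpos by blast
      then have "a i = a 0" unfolding a_def by simp
      moreover have "(1 / (2 ^ k * a 0)) * a 0 = (1 / 2 ^ k :: real)" using a0 by simp
      ultimately show "1 / 2 ^ k = (1 / (2 ^ k * a 0)) * a i" by simp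
    qed
    then show "\<exists>c. \<forall>i < m. 1 / 2 ^ k = c * a i" by (rule exI)
  qed
  have P1: "w \<in> simplex m \<longrightarrow> (A_optimal X nu w \<longleftrightarrow> (\<exists>c. \<forall>i<m. w i = c * nu i powr (-1/2)))"
    using part1[of w] by (simp add: a_def)
  have P2: "A_optimal X nu (\<lambda>i. 1 / 2 ^ k) \<longleftrightarrow> (\<forall>i<m. \<forall>j<m. nu i = nu j)"
    using part1[OF unif] part2 by simp
  show ?thesis
    using P1 P2 unfolding m_def X_def by simp
qed

end
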